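(* Let $(X,f)$ be a dynamical system and $\mathbf{a}=(a_1,\dots,a_r)\in\mathbb{N}^r$. The following are equivalent: (1) $(X,f)$ is $\mathbf{a}$-transitive; (2) $(X,f)$ is $\nabla(\mathcal{F}[\mathbf{a}])$-point transitive; (3) $Trans(X,f)=Trans_{\nabla(\mathcal{F}[\mathbf{a}])}(X,f)\neq\emptyset$.
   Context: A dynamical system is a pair $(X,f)$ with $X$ a compact metric space and $f:X\to X$ continuous. $\mathbb{N}=\{1,2,\dots\}$, $\mathbb{Z}_+=\{0,1,2,\dots\}$. $N(U,V)=\{n\in\mathbb{N}: U\cap f^{-n}(V)\neq\emptyset\}$, $N(x,U)=\{n\in\mathbb{N}: f^n(x)\in U\}$. $(X,f)$ is transitive if $N(U,V)\neq\emptyset$ for all non-empty open $U,V$. A transitive point is an $x$ with $\omega(x,f)=X$; $Trans(X,f)$ is the set of transitive points. For a family $\mathcal{F}$ of subsets of $\mathbb{N}$, $x$ is an $\mathcal{F}$-transitive point if $N(x,U)\in\mathcal{F}$ for every non-empty open $U$; $Trans_{\mathcal{F}}(X,f)$ is the set of these, and $(X,f)$ is $\mathcal{F}$-point transitive if it is non-empty. For $F\subset\mathbb{N}$, $F-F=\{a-b:a,b\in F,\ a>b\}$ and $\nabla(\mathcal{F})=\{F\subset\mathbb{N}: F-F\in\mathcal{F}\}$. For $\mathbf{a}\in\mathbb{N}^r$, $(X,f)$ is $\mathbf{a}$-transitive if $(X^r,f^{a_1}\times\dots\times f^{a_r})$ is transitive. $\mathcal{F}[\mathbf{a}]$ is the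 collection of all $F\subset\mathbb{N}$ such that for every $(n_1,\dots,n_r)\in\mathbb{Z}_+^r$ there exists $k\in\mathbb{N}$ with $ka_i+n_i\in F$ for all $i=1,\dots,r$. *)

theory Defs
  imports "HOL-Analysis.Analysis"
begin

definition top_transitive :: "'b topology \<Rightarrow> ('b \<Rightarrow> 'b) \<Rightarrow> bool" where
  "top_transitive T g \<longleftrightarrow>
     (\<forall>U V. openin T U \<and> U \<noteq> {} \<and> openin T V \<and> V \<noteq> {} \<longrightarrow>
        (\<exists>n\<ge>1. \<exists>x\<in>U. (g ^^ n) x \<in> V))"

definition hit_times :: "('a \<Rightarrow> 'a) \<Rightarrow> 'a \<Rightarrow> 'a set \<Rightarrow> nat set" where
  "hit_times f x U = {n. n \<ge> 1 \<and> (f ^^ n) x \<in> U}"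

definition omega_limit :: "('a::topological_space \<Rightarrow> 'a) \<Rightarrow> 'a \<Rightarrow> 'a set" where
  "omega_limit f x = (\<Inter>N. closure ((\<lambda>n. (f ^^ n) x) ` {N..}))"

definition trans_points :: "'a::topological_space set \<Rightarrow> ('a \<Rightarrow> 'a) \<Rightarrow> 'a set" where
  "trans_points X f = {x \<in> X. omega_limit f x = X}"

definition F_trans_points :: "nat set set \<Rightarrow> 'a::topological_space set \<Rightarrow> ('a \<Rightarrow> 'a) \<Rightarrow> 'a set" where
  "F_trans_points Fam X f =
     {x \<in> X. \<forall>U. openin (top_of_set X) U \<and> U \<noteq> {} \<longrightarrow> hit_times f x U \<in> Fam}"

definition diff_set :: "nat set \<Rightarrow> nat set" where
  "diff_set F = {a - b | a b. a \<in> F \<and> b \<in> F \<and> a > b}"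

definition nabla :: "nat set set \<Rightarrow> nat set set" where
  "nabla Fam = {F. F \<subseteq> {1..} \<and> diff_set F \<in> Fam}"

text \<open>F[a] for a = (a 0, ..., a (r-1))\<close>
definition F_vec :: "nat \<Rightarrow> (nat \<Rightarrow> nat) \<Rightarrow> nat set set" where
  "F_vec r a = {F. F \<subseteq> {1..} \<and>
     (\<forall>n::nat \<Rightarrow> nat. \<exists>k\<ge>1. \<forall>i<r. k * a i + n i \<in> F)}"

definition a_transitive :: "'a::topological_space set \<Rightarrow> ('a \<Rightarrow> 'a) \<Rightarrow> nat \<Rightarrow> (nat \<Rightarrow> nat) \<Rightarrow> bool" where
  "a_transitive X f r a \<longleftrightarrow>
     top_transitive (product_topology (\<lambda>_. top_of_set X) {..<r})
       (\<lambda>x. restrict (\<lambda>i. (f ^^ a i) (x i)) {..<r})"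

end

theory Submission
  imports Defs
begin

lemma funpow_cont:
  assumes "continuous_on X f" "f ` X \<subseteq> X"
  shows "continuous_on X (f ^^ n) \<and> (f ^^ n) ` X \<subseteq> X"
proof (induction n)
  case 0 then show ?case by (simp add: continuous_on_id)
next
  case (Suc n)
  have "continuous_on ((f ^^ n) ` X) f" using continuous_on_subset[OF assms(1)] Suc by blast
  then have "continuous_on X (f \<circ> (f ^^ n))"
    using continuous_on_compose Suc by blast
  then show ?case using Suc assms by auto
qed

lemma pre_open:
  assumes "continuous_on X f" "f ` X \<subseteq> X" "openin (top_of_set X) V"
  shows "openin (top_of_set X) {y\<in>X. (f ^^ n) y \<in> V}"
proof -
  obtain T where T: "open T" "V = X \<inter> T" using assms(3) by (auto simp: openin_open)
  have "{y\<in>X. (f ^^ n) y \<in> V} = X \<inter> (f ^^ n) -` T"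
    using funpow_cont[OF assms(1,2), of n] T by auto
  then show ?thesis
    using continuous_openin_preimage_gen[OF conjunct1[OF funpow_cont[OF assms(1,2)]] T(1)] by simp
qed

lemma funpow_in: "x \<in> X \<Longrightarrow> f ` X \<subseteq> X \<Longrightarrow> (f ^^ n) x \<in> X"
  by (induction n) auto

definition PT :: "'a::topological_space set \<Rightarrow> ('a \<Rightarrow> 'a) \<Rightarrow> 'a \<Rightarrow> bool" where
  "PT X f x \<longleftrightarrow> (\<forall>U. openin (top_of_set X) U \<and> U \<noteq> {} \<longrightarrow> infinite (hit_times f x U))"

definition NUU :: "('a \<Rightarrow> 'a) \<Rightarrow> 'a set \<Rightarrow> nat set" where
  "NUU f U = {n. n \<ge> 1 \<and> (\<exists>y\<in>U. (f ^^ n) y \<in> U)}"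

lemma trans_points_char:
  fixes X :: "'a::metric_space set"
  assumes "compact X" "f ` X \<subseteq> X"
  shows "trans_points X f = {x\<in>X. PT X f x}"
proof -
  have cl: "closed X" using assms(1) compact_imp_closed by blast
  have sub: "omega_limit f x \<subseteq> X" if "x \<in> X" for x
  proof -
    have "(\<lambda>n. (f ^^ n) x) ` {0..} \<subseteq> X" using funpow_in[OF that assms(2)] by auto
    then have "closure ((\<lambda>n. (f ^^ n) x) ` {0..}) \<subseteq> X" using cl closure_minimal by blast
    then show ?thesis unfolding omega_limit_def by blast
  qed
  have "omega_limit f x = X \<longleftrightarrow> PT X f x" if x: "x \<in> X" for x
  proof
    assume om: "omega_limit f x = X"
    show "PT X f x" unfolding PT_def
    proof (intro allI impI)
      fix U assume U: "openin (top_of_set X) U \<and> U \<noteq> {}"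
      then obtain y where y: "y \<in> U" by blast
      then obtain e where e: "e > 0" "ball y e \<inter> X \<subseteq> U" using U openin_contains_ball by metis
      have yX: "y \<in> X" using U y openin_imp_subset by blast
      show "infinite (hit_times f x U)" unfolding infinite_nat_iff_unbounded_le
      proof
        fix M
        have "y \<in> closure ((\<lambda>n. (f ^^ n) x) ` {Suc M..})" using om yX unfolding omega_limit_def by blast
        then obtain n where n: "n \<ge> Suc M" "dist ((f ^^ n) x) y < e"
          using e(1) unfolding closure_approachable by auto
        then have "(f ^^ n) x \<in> U" using e funpow_in[OF x assms(2)] by (auto simp: dist_commute)
        then show "\<exists>n\<ge>M. n \<in> hit_times f x U" using n unfolding hit_times_def by (intro exI[of _ n]) auto
      qed
    qed
  next
    assume P: "PT X f x"
    have "X \<subseteq> omega_limit f x" unfolding omega_limit_def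
    proof (intro subsetI InterI, clarify)
      fix y N assume yX: "y \<in> X"
      show "y \<in> closure ((\<lambda>n. (f ^^ n) x) ` {N..})" unfolding closure_approachable
      proof (intro allI impI)
        fix e :: real assume e: "e > 0"
        have "openin (top_of_set X) (X \<inter> ball y e)" by (simp add: openin_open_Int)
        moreover have "X \<inter> ball y e \<noteq> {}" using yX e by auto
        ultimately have "infinite (hit_times f x (X \<inter> ball y e))" using P unfolding PT_def by blast
        then obtain n where "n \<ge> N" "n \<in> hit_times f x (X \<inter> ball y e)" unfolding infinite_nat_iff_unbounded_le by blast
        then show "\<exists>z\<in>(\<lambda>n. (f ^^ n) x) ` {N..}. dist z y < e"
          unfolding hit_times_def by (auto simp: dist_commute)
      qed
    qed
    then show "omega_limit f x = X" using sub[OF x] by blast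
  qed
  then show ?thesis unfolding trans_points_def by (auto simp del: omega_limit_def)
qed

lemma diff_hit:
  assumes "continuous_on X f" "f ` X \<subseteq> X" "x \<in> X" "PT X f x" "openin (top_of_set X) U"
  shows "diff_set (hit_times f x U) = NUU f U"
proof
  show "diff_set (hit_times f x U) \<subseteq> NUU f U"
  proof
    fix n assume "n \<in> diff_set (hit_times f x U)"
    then obtain p q where pq: "n = p - q" "p \<in> hit_times f x U" "q \<in> hit_times f x U" "p > q"
      unfolding diff_set_def by blast
    have "p = n + q" using pq by simp
    then have "(f ^^ n) ((f ^^ q) x) = (f ^^ p) x" by (simp add: funpow_add)
    moreover have "(f ^^ q) x \<in> U" "(f ^^ p) x \<in> U" "n \<ge> 1" using pq unfolding hit_times_def by auto
    ultimately show "n \<in> NUU f U" unfolding NUU_def by (metis (mono_tags, lifting) mem_Collect_eq)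
  qed
next
  show "NUU f U \<subseteq> diff_set (hit_times f x U)"
  proof
    fix n assume "n \<in> NUU f U"
    then obtain y where y: "n \<ge> 1" "y \<in> U" "(f ^^ n) y \<in> U" unfolding NUU_def by blast
    have UX: "U \<subseteq> X" using assms(5) openin_imp_subset by blast
    let ?W = "U \<inter> {y\<in>X. (f ^^ n) y \<in> U}"
    have "openin (top_of_set X) ?W" using pre_open[OF assms(1,2,5)] assms(5) by blast
    moreover have "?W \<noteq> {}" using y UX by blast
    ultimately have "infinite (hit_times f x ?W)" using assms(4) unfolding PT_def by blast
    then have "hit_times f x ?W \<noteq> {}" by (rule infinite_imp_nonempty)
    then obtain b where b: "b \<in> hit_times f x ?W" by blast
    then have "n + b \<in> hit_times f x U" "b \<in> hit_times f x U"
      unfolding hit_times_def by (auto simp: funpow_add)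
    then show "n \<in> diff_set (hit_times f x U)" unfolding diff_set_def using y(1)
      by (intro CollectI exI[of _ "n+b"] exI[of _ b]) auto
  qed
qed

lemma Fvec_infinite:
  assumes "r \<ge> 1" "D \<in> F_vec r a"
  shows "infinite D"
  unfolding infinite_nat_iff_unbounded_le
proof
  fix M
  have "\<forall>n::nat\<Rightarrow>nat. \<exists>k\<ge>1. \<forall>i<r. k * a i + n i \<in> D" using assms(2) unfolding F_vec_def by simp
  then have "\<exists>k\<ge>1. \<forall>i<r. k * a i + (\<lambda>_. M) i \<in> D" by (rule spec)
  then obtain k where "k \<ge> 1" "\<forall>i<r. k * a i + M \<in> D" by auto
  then show "\<exists>n\<ge>M. n \<in> D" using assms(1) by (intro exI[of _ "k * a 0 + M"]) auto
qed

lemma diff_set_finite: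
  assumes "finite H" shows "finite (diff_set H)"
proof -
  have "diff_set H \<subseteq> (\<lambda>(p,q). p - q) ` (H \<times> H)" unfolding diff_set_def by auto
  moreover have "finite ((\<lambda>(p,q). p - q) ` (H \<times> H))" using assms by simp
  ultimately show ?thesis by (rule finite_subset)
qed

lemma Ftrans_PT:
  assumes "r \<ge> 1" "x \<in> F_trans_points (nabla (F_vec r a)) X f"
  shows "x \<in> X \<and> PT X f x"
proof -
  have x: "x \<in> X" and H: "\<And>U. openin (top_of_set X) U \<Longrightarrow> U \<noteq> {} \<Longrightarrow> diff_set (hit_times f x U) \<in> F_vec r a"
    using assms(2) unfolding F_trans_points_def nabla_def by auto
  have "infinite (hit_times f x U)" if "openin (top_of_set X) U" "U \<noteq> {}" for U
    using Fvec_infinite[OF assms(1) H[OF that]] diff_set_finite by blast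
  then show ?thesis using x unfolding PT_def by blast
qed

lemma Ftrans_iff:
  assumes "continuous_on X f" "f ` X \<subseteq> X" "x \<in> X" "PT X f x"
  shows "x \<in> F_trans_points (nabla (F_vec r a)) X f \<longleftrightarrow>
    (\<forall>U. openin (top_of_set X) U \<and> U \<noteq> {} \<longrightarrow> NUU f U \<in> F_vec r a)"
proof -
  have "hit_times f x U \<subseteq> {1..}" for U unfolding hit_times_def by auto
  then show ?thesis
  using diff_hit[OF assms] assms(3) unfolding F_trans_points_def nabla_def by simp
qed


definition TT :: "'a::topological_space set \<Rightarrow> ('a \<Rightarrow> 'a) \<Rightarrow> bool" where
  "TT X f \<longleftrightarrow> (\<forall>U V. openin (top_of_set X) U \<and> U \<noteq> {} \<and> openin (top_of_set X) V \<and> V \<noteq> {}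
     \<longrightarrow> (\<exists>n\<ge>1. \<exists>x\<in>U. (f ^^ n) x \<in> V))"

lemma TT_D:
  assumes "TT X f" "openin (top_of_set X) U" "U \<noteq> {}" "openin (top_of_set X) V" "V \<noteq> {}"
  shows "\<exists>n\<ge>1. \<exists>x\<in>U. (f ^^ n) x \<in> V"
  using assms unfolding TT_def by simp

lemma TT_unbounded:
  assumes "continuous_on X f" "f ` X \<subseteq> X" "TT X f"
  shows "\<And>U V. openin (top_of_set X) U \<Longrightarrow> U \<noteq> {} \<Longrightarrow> openin (top_of_set X) V \<Longrightarrow> V \<noteq> {}
     \<Longrightarrow> \<exists>n\<ge>N. \<exists>x\<in>U. (f ^^ n) x \<in> V"
proof (induction N)
  case 0
  then show ?case using TT_D[OF assms(3)] by (meson le0)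
next
  case (Suc N)
  have XX: "openin (top_of_set X) X" "X \<noteq> {}" using Suc.prems openin_imp_subset by auto
  obtain m y where my: "m \<ge> 1" "y \<in> X" "(f ^^ m) y \<in> V"
    using TT_D[OF assms(3) XX Suc.prems(3,4)] by blast
  let ?W = "{z\<in>X. (f ^^ m) z \<in> V}"
  have "openin (top_of_set X) ?W" using pre_open[OF assms(1,2) Suc.prems(3)] .
  moreover have "?W \<noteq> {}" using my by blast
  ultimately have "\<exists>n\<ge>N. \<exists>x\<in>U. (f ^^ n) x \<in> ?W"
    by (rule Suc.IH[OF Suc.prems(1,2)])
  then obtain n x where nx: "n \<ge> N" "x \<in> U" "(f ^^ n) x \<in> ?W" by blast
  then have "(f ^^ (m + n)) x \<in> V" by (simp add: funpow_add)
  moreover have "m + n \<ge> Suc N" using nx my by simp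
  ultimately show ?case using nx(2) by (intro exI[of _ "m+n"]) blast
qed

lemma TT_trans_point:
  fixes X :: "'a::metric_space set"
  assumes "compact X" "X \<noteq> {}" "continuous_on X f" "f ` X \<subseteq> X" "TT X f"
  shows "\<exists>x\<in>X. PT X f x"
proof -
  define rr :: "nat \<Rightarrow> real" where "rr m = inverse (real (Suc m))" for m
  have rr_pos: "rr m > 0" for m unfolding rr_def by simp
  have "\<forall>m. \<exists>C. C \<subseteq> X \<and> finite C \<and> X \<subseteq> (\<Union>c\<in>C. ball c (rr m))"
  proof
    fix m
    have cov: "X \<subseteq> (\<Union>c\<in>X. ball c (rr m))" using rr_pos by force
    obtain C' where "C' \<subseteq> X" "finite C'" "X \<subseteq> (\<Union>c\<in>C'. ball c (rr m))"
      by (rule compactE_image[OF assms(1) _ cov]) auto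
    then show "\<exists>C. C \<subseteq> X \<and> finite C \<and> X \<subseteq> (\<Union>c\<in>C. ball c (rr m))" by blast
  qed
  from choice[OF this] obtain C where
    CC: "\<forall>m. C m \<subseteq> X \<and> finite (C m) \<and> X \<subseteq> (\<Union>c\<in>C m. ball c (rr m))" by blast
  have C: "\<And>m. C m \<subseteq> X" "\<And>m. finite (C m)" "\<And>m. X \<subseteq> (\<Union>c\<in>C m. ball c (rr m))"
    using CC by auto
  define G where "G m c N = {z\<in>X. \<exists>n\<ge>N. (f ^^ n) z \<in> ball c (rr m)}" for m c N
  define \<G> where "\<G> = (\<Union>m. \<Union>N. (\<lambda>c. G m c N) ` C m)"
  have cG: "countable \<G>" unfolding \<G>_def
    by (intro countable_UN countable_image countable_finite[OF C(2)] countableI_type)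
  have Gopen: "openin (top_of_set X) (G m c N)" for m c N
  proof -
    have "G m c N = (\<Union>n\<in>{N..}. {z\<in>X. (f ^^ n) z \<in> X \<inter> ball c (rr m)})"
      unfolding G_def using funpow_in[OF _ assms(4)] by auto
    moreover have "openin (top_of_set X) {z\<in>X. (f ^^ n) z \<in> X \<inter> ball c (rr m)}" for n
      by (rule pre_open[OF assms(3,4)]) (simp add: openin_open_Int)
    ultimately show ?thesis by (auto intro!: openin_Union)
  qed
  have Gdense: "top_of_set X closure_of (G m c N) = topspace (top_of_set X)" if "c \<in> X" for m c N
    unfolding dense_intersects_open
  proof (intro allI impI)
    fix T assume T: "openin (top_of_set X) T \<and> T \<noteq> {}"
    have "openin (top_of_set X) (X \<inter> ball c (rr m))" by (simp add: openin_open_Int)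
    moreover have "X \<inter> ball c (rr m) \<noteq> {}" using that rr_pos[of m] by force
    ultimately have "\<exists>n\<ge>N. \<exists>z\<in>T. (f ^^ n) z \<in> X \<inter> ball c (rr m)"
      using TT_unbounded[OF assms(3,4,5)] T by blast
    then obtain n z where "n \<ge> N" "z \<in> T" "(f ^^ n) z \<in> X \<inter> ball c (rr m)" by blast
    moreover have "z \<in> X" using T \<open>z \<in> T\<close> openin_imp_subset by blast
    ultimately show "G m c N \<inter> T \<noteq> {}" unfolding G_def by blast
  qed
  have sp: "locally_compact_space (top_of_set X) \<and> regular_space (top_of_set X)"
  proof -
    have "compact_space (top_of_set X)" using assms(1) by (simp add: compact_space_subtopology)
    moreover have "Hausdorff_space (top_of_set X)" by (simp add: Hausdorff_space_subtopology)
    ultimately show ?thesis using compact_imp_locally_compact_space compact_Hausdorff_imp_regular_space by blast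
  qed
  have "top_of_set X closure_of \<Inter>\<G> = topspace (top_of_set X)"
  proof (rule Baire_category)
    show "completely_metrizable_space (top_of_set X) \<or>
      locally_compact_space (top_of_set X) \<and> regular_space (top_of_set X)" using sp by blast
    show "countable \<G>" by (rule cG)
    fix T assume "T \<in> \<G>"
    then obtain m N c where "c \<in> C m" "T = G m c N" unfolding \<G>_def by blast
    then show "openin (top_of_set X) T \<and> top_of_set X closure_of T = topspace (top_of_set X)"
      using Gopen Gdense C(1) by blast
  qed
  then have "\<not> disjnt X (\<Inter>\<G>)" using assms(2) closure_of_eq_empty_gen[of "top_of_set X" "\<Inter>\<G>"] by auto
  then obtain x where x: "x \<in> X" "x \<in> \<Inter>\<G>" unfolding disjnt_def by blast
  have xG: "\<exists>n\<ge>N. (f ^^ n) x \<in> ball c (rr m)" if "c \<in> C m" for m c N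
  proof -
    have "G m c N \<in> \<G>" unfolding \<G>_def using that by blast
    then show ?thesis using x unfolding G_def by blast
  qed
  have "PT X f x" unfolding PT_def
  proof (intro allI impI)
    fix U assume U: "openin (top_of_set X) U \<and> U \<noteq> {}"
    then obtain y where y: "y \<in> U" by blast
    then obtain e where e: "e > 0" "ball y e \<inter> X \<subseteq> U" using U openin_contains_ball by metis
    have yX: "y \<in> X" using U y openin_imp_subset by blast
    obtain m where m: "inverse (real (Suc m)) < e / 2" using e(1)
      by (metis half_gt_zero_iff reals_Archimedean)
    obtain c where c: "c \<in> C m" "y \<in> ball c (rr m)" using C(3)[of m] yX by blast
    show "infinite (hit_times f x U)" unfolding infinite_nat_iff_unbounded_le
    proof
      fix M
      obtain n where n: "n \<ge> Suc M" "(f ^^ n) x \<in> ball c (rr m)" using xG[OF c(1)] by blast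
      have "dist y ((f ^^ n) x) \<le> dist y c + dist c ((f ^^ n) x)" by (rule dist_triangle)
      also have "\<dots> < e" using c(2) n(2) m unfolding rr_def by (simp add: dist_commute)
      finally have "(f ^^ n) x \<in> U" using e(2) funpow_in[OF x(1) assms(4)] by auto
      then show "\<exists>n\<ge>M. n \<in> hit_times f x U" using n(1) unfolding hit_times_def
        by (intro exI[of _ n]) auto
    qed
  qed
  then show ?thesis using x(1) by blast
qed


lemma g_iter:
  fixes r :: nat and a :: "nat \<Rightarrow> nat" and f :: "'a \<Rightarrow> 'a" and n :: nat
  assumes "y \<in> extensional {..<r}"
  shows "((\<lambda>x. restrict (\<lambda>i. (f ^^ a i) (x i)) {..<r}) ^^ n) y
       = restrict (\<lambda>i. (f ^^ (a i * n)) (y i)) {..<r}"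
proof (induction n)
  case 0
  then show ?case using assms by (auto simp: extensional_def fun_eq_iff)
next
  case (Suc n)
  have "(f ^^ (a i * Suc n)) = (f ^^ a i) \<circ> (f ^^ (a i * n))" for i
    by (simp add: funpow_add[symmetric])
  then show ?case using Suc by (auto simp: restrict_def)
qed

lemma box_open:
  fixes r :: nat
  assumes "\<And>i. i < r \<Longrightarrow> openin (top_of_set X) (B i)"
  shows "openin (product_topology (\<lambda>_. top_of_set X) {..<r}) (PiE {..<r} B)"
proof -
  have "finite {i \<in> {..<r}. B i \<noteq> topspace (top_of_set X)}"
    by (rule finite_subset[of _ "{..<r}"]) auto
  then show ?thesis unfolding openin_PiE_gen using assms by auto
qed

lemma top_transitive_D:
  assumes "top_transitive T g" "openin T U" "U \<noteq> {}" "openin T V" "V \<noteq> {}"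
  shows "\<exists>n\<ge>1. \<exists>x\<in>U. (g ^^ n) x \<in> V"
  using assms unfolding top_transitive_def by simp

lemma a_trans_TT:
  assumes "a_transitive X f r a" "r \<ge> 1" "a 0 \<ge> 1"
  shows "TT X f"
  unfolding TT_def
proof (intro allI impI)
  fix U V assume H: "openin (top_of_set X) U \<and> U \<noteq> {} \<and> openin (top_of_set X) V \<and> V \<noteq> {}"
  have o1: "openin (product_topology (\<lambda>_. top_of_set X) {..<r}) (PiE {..<r} (\<lambda>_. U))"
    using box_open[of r X "\<lambda>_. U"] H by blast
  have o2: "openin (product_topology (\<lambda>_. top_of_set X) {..<r}) (PiE {..<r} (\<lambda>_. V))"
    using box_open[of r X "\<lambda>_. V"] H by blast
  have ne: "PiE {..<r} (\<lambda>_. U) \<noteq> {}" "PiE {..<r} (\<lambda>_. V) \<noteq> {}" using H by (auto simp: PiE_eq_empty_iff)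
  obtain n y where ny: "n \<ge> 1" "y \<in> PiE {..<r} (\<lambda>_. U)"
    "((\<lambda>x. restrict (\<lambda>i. (f ^^ a i) (x i)) {..<r}) ^^ n) y \<in> PiE {..<r} (\<lambda>_. V)"
    using top_transitive_D[OF assms(1)[unfolded a_transitive_def] o1 ne(1) o2 ne(2)] by blast
  have "y \<in> extensional {..<r}" using ny(2) by (simp add: PiE_iff)
  then have "((\<lambda>x. restrict (\<lambda>i. (f ^^ a i) (x i)) {..<r}) ^^ n) y = restrict (\<lambda>i. (f ^^ (a i * n)) (y i)) {..<r}"
    by (rule g_iter)
  then have "restrict (\<lambda>i. (f ^^ (a i * n)) (y i)) {..<r} \<in> PiE {..<r} (\<lambda>_. V)"
    using ny(3) by simp
  then have "(f ^^ (a 0 * n)) (y 0) \<in> V" using assms(2) by (auto simp: Pi_iff)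
  moreover have "y 0 \<in> U" using ny(2) assms(2) PiE_mem[of y "{..<r}" "\<lambda>_. U" 0] by simp
  moreover have "a 0 * n \<ge> 1" using assms(3) ny(1) by simp
  ultimately show "\<exists>n\<ge>1. \<exists>x\<in>U. (f ^^ n) x \<in> V" by blast
qed

lemma TT_surj:
  fixes X :: "'a::metric_space set"
  assumes "compact X" "continuous_on X f" "f ` X \<subseteq> X" "TT X f"
  shows "(f ^^ k) ` X = X"
proof -
  have fX: "f ` X = X"
  proof (rule ccontr)
    assume "f ` X \<noteq> X"
    then have ne: "X - f ` X \<noteq> {}" using assms(3) by blast
    have "compact (f ` X)" using compact_continuous_image[OF assms(2,1)] .
    then have "open (- (f ` X))" using compact_imp_closed by blast
    then have "openin (top_of_set X) (X \<inter> - (f ` X))" by (simp add: openin_open_Int)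
    moreover have "X \<inter> - (f ` X) = X - f ` X" by blast
    ultimately have o: "openin (top_of_set X) (X - f ` X)" by simp
    have Xne: "X \<noteq> {}" using ne by blast
    have oX: "openin (top_of_set X) X" by simp
    obtain n x where nx: "n \<ge> 1" "x \<in> X" "(f ^^ n) x \<in> X - f ` X"
      using TT_D[OF assms(4) oX Xne o ne] by blast
    then obtain m where "n = Suc m" by (cases n) auto
    then have "(f ^^ n) x = f ((f ^^ m) x)" by simp
    moreover have "(f ^^ m) x \<in> X" using funpow_in[OF nx(2) assms(3)] .
    ultimately show False using nx(3) by blast
  qed
  show ?thesis
  proof (induction k)
    case 0 then show ?case by simp
  next
    case (Suc k)
    have "(f ^^ Suc k) ` X = f ` ((f ^^ k) ` X)" by (simp add: image_comp)
    then show ?case using Suc fX by simp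
  qed
qed


lemma a_trans_C:
  fixes X :: "'a::metric_space set"
  assumes "compact X" "continuous_on X f" "f ` X \<subseteq> X" "TT X f" "a_transitive X f r a"
    "\<forall>i<r. a i \<ge> 1" "openin (top_of_set X) W" "W \<noteq> {}"
  shows "NUU f W \<in> F_vec r a"
proof -
  have WX: "W \<subseteq> X" using assms(7) openin_imp_subset by blast
  have "\<exists>k\<ge>1. \<forall>i<r. k * a i + n i \<in> NUU f W" for n :: "nat \<Rightarrow> nat"
  proof -
    let ?V = "\<lambda>i. {y\<in>X. (f ^^ n i) y \<in> W}"
    have o1: "openin (product_topology (\<lambda>_. top_of_set X) {..<r}) (PiE {..<r} (\<lambda>_. W))"
      using box_open[of r X "\<lambda>_. W"] assms(7) by blast
    have o2: "openin (product_topology (\<lambda>_. top_of_set X) {..<r}) (PiE {..<r} ?V)"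
      using box_open[of r X ?V] pre_open[OF assms(2,3,7)] by blast
    have Vne: "?V i \<noteq> {}" for i
    proof -
      obtain w where "w \<in> W" using assms(8) by blast
      then have "w \<in> (f ^^ n i) ` X" using TT_surj[OF assms(1-4)] WX by auto
      then show ?thesis using \<open>w \<in> W\<close> by auto
    qed
    have ne: "PiE {..<r} (\<lambda>_. W) \<noteq> {}" "PiE {..<r} ?V \<noteq> {}" using assms(8) Vne
      by (auto simp: PiE_eq_empty_iff)
    obtain k y where ky: "k \<ge> 1" "y \<in> PiE {..<r} (\<lambda>_. W)"
      "((\<lambda>x. restrict (\<lambda>i. (f ^^ a i) (x i)) {..<r}) ^^ k) y \<in> PiE {..<r} ?V"
      using top_transitive_D[OF assms(5)[unfolded a_transitive_def] o1 ne(1) o2 ne(2)] by blast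
    have "y \<in> extensional {..<r}" using ky(2) by (simp add: PiE_iff)
    then have "((\<lambda>x. restrict (\<lambda>i. (f ^^ a i) (x i)) {..<r}) ^^ k) y = restrict (\<lambda>i. (f ^^ (a i * k)) (y i)) {..<r}"
      by (rule g_iter)
    then have h: "restrict (\<lambda>i. (f ^^ (a i * k)) (y i)) {..<r} \<in> PiE {..<r} ?V"
      using ky(3) by simp
    have "k * a i + n i \<in> NUU f W" if i: "i < r" for i
    proof -
      have "(f ^^ n i) ((f ^^ (a i * k)) (y i)) \<in> W" using h i by (auto simp: Pi_iff)
      moreover have "(f ^^ n i) ((f ^^ (a i * k)) (y i)) = (f ^^ (k * a i + n i)) (y i)"
        by (simp add: funpow_add mult.commute add.commute)
      moreover have "y i \<in> W" using ky(2) i by (auto simp: Pi_iff)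
      moreover have "k * a i + n i \<ge> 1" using assms(6) i ky(1)
        by (metis add_increasing2 le0 mult_le_mono nat_mult_1)
      ultimately show ?thesis unfolding NUU_def by auto
    qed
    then show ?thesis using ky(1) by blast
  qed
  moreover have "NUU f W \<subseteq> {1..}" unfolding NUU_def by auto
  ultimately show ?thesis unfolding F_vec_def by blast
qed


lemma box_inside:
  fixes r :: nat
  assumes "openin (product_topology (\<lambda>_. top_of_set X) {..<r}) S" "u \<in> S"
  obtains B where "\<And>i. i < r \<Longrightarrow> openin (top_of_set X) (B i)" "\<And>i. i < r \<Longrightarrow> B i \<noteq> {}"
    "PiE {..<r} B \<subseteq> S"
proof -
  obtain B where B: "\<forall>i\<in>{..<r}. openin (top_of_set X) (B i)" "u \<in> PiE {..<r} B" "PiE {..<r} B \<subseteq> S"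
    using assms unfolding openin_product_topology_alt by blast
  have "B i \<noteq> {}" if "i < r" for i using B(2) that by (auto simp: PiE_iff)
  then show ?thesis using that B by blast
qed

lemma C_a_trans:
  fixes X :: "'a::metric_space set" and r :: nat and a :: "nat \<Rightarrow> nat"
  assumes "continuous_on X f" "f ` X \<subseteq> X" "x0 \<in> X" "PT X f x0"
    "\<forall>W. openin (top_of_set X) W \<and> W \<noteq> {} \<longrightarrow> NUU f W \<in> F_vec r a"
  shows "a_transitive X f r a"
  unfolding a_transitive_def top_transitive_def
proof (intro allI impI)
  fix U' V' assume H: "openin (product_topology (\<lambda>_. top_of_set X) {..<r}) U' \<and> U' \<noteq> {} \<and>
     openin (product_topology (\<lambda>_. top_of_set X) {..<r}) V' \<and> V' \<noteq> {}"
  obtain u v where uv: "u \<in> U'" "v \<in> V'" using H by blast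
  obtain UB where UB: "\<And>i. i < r \<Longrightarrow> openin (top_of_set X) (UB i)" "\<And>i. i < r \<Longrightarrow> UB i \<noteq> {}"
    "PiE {..<r} UB \<subseteq> U'" using box_inside[of X r U' u] H uv(1) by blast
  obtain VB where VB: "\<And>i. i < r \<Longrightarrow> openin (top_of_set X) (VB i)" "\<And>i. i < r \<Longrightarrow> VB i \<noteq> {}"
    "PiE {..<r} VB \<subseteq> V'" using box_inside[of X r V' v] H uv(2) by blast
  have "\<forall>i. \<exists>p. i < r \<longrightarrow> fst p \<le> snd p \<and> fst p \<in> hit_times f x0 (VB i) \<and> snd p \<in> hit_times f x0 (UB i)"
  proof
    fix i
    show "\<exists>p. i < r \<longrightarrow> fst p \<le> snd p \<and> fst p \<in> hit_times f x0 (VB i) \<and> snd p \<in> hit_times f x0 (UB i)"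
    proof (cases "i < r")
      case True
      have "infinite (hit_times f x0 (VB i))" using assms(4) VB(1,2)[OF True] unfolding PT_def by blast
      then have "hit_times f x0 (VB i) \<noteq> {}" by (rule infinite_imp_nonempty)
      then obtain t where t: "t \<in> hit_times f x0 (VB i)" by blast
      have "infinite (hit_times f x0 (UB i))" using assms(4) UB(1,2)[OF True] unfolding PT_def by blast
      then obtain s where s: "s \<ge> t" "s \<in> hit_times f x0 (UB i)" unfolding infinite_nat_iff_unbounded_le by blast
      show ?thesis using s t by (intro exI[of _ "(t, s)"]) simp
    qed simp
  qed
  from choice[OF this] obtain p where p: "\<And>i. i < r \<Longrightarrow> fst (p i) \<le> snd (p i) \<and>
     fst (p i) \<in> hit_times f x0 (VB i) \<and> snd (p i) \<in> hit_times f x0 (UB i)" by blast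
  define t where "t i = fst (p i)" for i
  define s where "s i = snd (p i)" for i
  have ts: "t i \<le> s i" "(f ^^ t i) x0 \<in> VB i" "(f ^^ s i) x0 \<in> UB i" if "i < r" for i
    using p[OF that] unfolding t_def s_def hit_times_def by auto
  define A where "A i = {w\<in>X. (f ^^ s i) w \<in> UB i} \<inter> {w\<in>X. (f ^^ t i) w \<in> VB i}" for i
  define W where "W = (\<Inter>i\<in>{..<r}. A i) \<inter> X"
  have Wo: "openin (top_of_set X) W"
  proof -
    have "openin (top_of_set X) (A i)" if "i \<in> {..<r}" for i
      unfolding A_def using pre_open[OF assms(1,2) UB(1)] pre_open[OF assms(1,2) VB(1)] that
      by (intro openin_Int) auto
    then have "openin (top_of_set X) ((\<Inter>i\<in>{..<r}. A i) \<inter> topspace (top_of_set X))"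
      by (intro openin_INT) auto
    then show ?thesis unfolding W_def by simp
  qed
  have x0W: "x0 \<in> W" unfolding W_def A_def using ts assms(3) by auto
  have "NUU f W \<in> F_vec r a" using assms(5) Wo x0W by blast
  then have "\<forall>n::nat\<Rightarrow>nat. \<exists>k\<ge>1. \<forall>i<r. k * a i + n i \<in> NUU f W" unfolding F_vec_def by simp
  then have "\<exists>k\<ge>1. \<forall>i<r. k * a i + (\<lambda>i. s i - t i) i \<in> NUU f W" by (rule spec)
  then obtain k where k: "k \<ge> 1" "\<And>i. i < r \<Longrightarrow> k * a i + (s i - t i) \<in> NUU f W" by auto
  have "\<forall>i. \<exists>w. i < r \<longrightarrow> w \<in> W \<and> (f ^^ (k * a i + (s i - t i))) w \<in> W"
    using k(2) unfolding NUU_def by blast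
  from choice[OF this] obtain w where w: "\<And>i. i < r \<Longrightarrow> w i \<in> W \<and> (f ^^ (k * a i + (s i - t i))) (w i) \<in> W"
    by blast
  define y where "y = restrict (\<lambda>i. (f ^^ s i) (w i)) {..<r}"
  have wA: "w i \<in> A i" "(f ^^ (k * a i + (s i - t i))) (w i) \<in> A i" if "i < r" for i
    using w[OF that] that unfolding W_def by auto
  have yU: "y \<in> U'"
  proof -
    have "y \<in> PiE {..<r} UB" unfolding y_def using wA(1) unfolding A_def by auto
    then show ?thesis using UB(3) by blast
  qed
  have "y \<in> extensional {..<r}" unfolding y_def by simp
  then have gy: "((\<lambda>x. restrict (\<lambda>i. (f ^^ a i) (x i)) {..<r}) ^^ k) y = restrict (\<lambda>i. (f ^^ (a i * k)) (y i)) {..<r}"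
    by (rule g_iter)
  have "(f ^^ (a i * k)) (y i) \<in> VB i" if i: "i < r" for i
  proof -
    have eq: "a i * k + s i = t i + (k * a i + (s i - t i))" using ts(1)[OF i] by (simp add: mult.commute)
    have "(f ^^ (a i * k)) (y i) = (f ^^ (a i * k + s i)) (w i)"
      unfolding y_def using i by (simp add: funpow_add)
    also have "\<dots> = (f ^^ (t i + (k * a i + (s i - t i)))) (w i)" by (simp only: eq)
    also have "\<dots> = (f ^^ t i) ((f ^^ (k * a i + (s i - t i))) (w i))" by (simp only: funpow_add comp_def)
    finally have "(f ^^ (a i * k)) (y i) = (f ^^ t i) ((f ^^ (k * a i + (s i - t i))) (w i))" .
    then show ?thesis using wA(2)[OF i] unfolding A_def by simp
  qed
  then have "restrict (\<lambda>i. (f ^^ (a i * k)) (y i)) {..<r} \<in> PiE {..<r} VB" by auto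
  then have "((\<lambda>x. restrict (\<lambda>i. (f ^^ a i) (x i)) {..<r}) ^^ k) y \<in> PiE {..<r} VB" using gy by simp
  then have "((\<lambda>x. restrict (\<lambda>i. (f ^^ a i) (x i)) {..<r}) ^^ k) y \<in> V'" using VB(3) by blast
  then show "\<exists>n\<ge>1. \<exists>x\<in>U'. ((\<lambda>x. restrict (\<lambda>i. (f ^^ a i) (x i)) {..<r}) ^^ n) x \<in> V'"
    using k(1) yU by blast
qed


theorem theorem4p7:
  fixes X :: "'a::metric_space set" and f :: "'a \<Rightarrow> 'a"
    and r :: nat and a :: "nat \<Rightarrow> nat"
  assumes "compact X" and "X \<noteq> {}"
    and "continuous_on X f" and "f ` X \<subseteq> X"
    and "r \<ge> 1" and "\<forall>i<r. a i \<ge> 1"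
  shows "(a_transitive X f r a \<longleftrightarrow> F_trans_points (nabla (F_vec r a)) X f \<noteq> {})
       \<and> (F_trans_points (nabla (F_vec r a)) X f \<noteq> {} \<longleftrightarrow>
          (trans_points X f = F_trans_points (nabla (F_vec r a)) X f
           \<and> F_trans_points (nabla (F_vec r a)) X f \<noteq> {}))"
proof -
  have TP: "trans_points X f = {x\<in>X. PT X f x}" by (rule trans_points_char[OF assms(1,4)])
  define Cc where "Cc = (\<forall>U. openin (top_of_set X) U \<and> U \<noteq> {} \<longrightarrow> NUU f U \<in> F_vec r a)"
  have FT: "x \<in> F_trans_points (nabla (F_vec r a)) X f \<longleftrightarrow> x \<in> X \<and> PT X f x \<and> Cc" for x
  proof
    assume x: "x \<in> F_trans_points (nabla (F_vec r a)) X f"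
    then have "x \<in> X \<and> PT X f x" by (rule Ftrans_PT[OF assms(5)])
    then show "x \<in> X \<and> PT X f x \<and> Cc" using Ftrans_iff[OF assms(3,4), of x r a] x unfolding Cc_def by blast
  next
    assume "x \<in> X \<and> PT X f x \<and> Cc"
    then show "x \<in> F_trans_points (nabla (F_vec r a)) X f"
      using Ftrans_iff[OF assms(3,4), of x r a] unfolding Cc_def by blast
  qed
  have a0: "a 0 \<ge> 1" using assms(5,6) by simp
  have A1: "Cc \<and> (\<exists>x\<in>X. PT X f x)" if at: "a_transitive X f r a"
  proof -
    have TT: "TT X f" by (rule a_trans_TT[OF at assms(5) a0])
    have "Cc" unfolding Cc_def using a_trans_C[OF assms(1,3,4) TT at assms(6)] by blast
    then show ?thesis using TT_trans_point[OF assms(1,2,3,4) TT] by blast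
  qed
  have A2: "a_transitive X f r a" if "Cc" "x \<in> X" "PT X f x" for x
    using C_a_trans[OF assms(3,4) that(2,3)] that(1) unfolding Cc_def by blast
  have E0: "F_trans_points (nabla (F_vec r a)) X f \<noteq> {} \<longleftrightarrow> Cc \<and> (\<exists>x\<in>X. PT X f x)"
    using FT by blast
  have E1: "a_transitive X f r a \<longleftrightarrow> Cc \<and> (\<exists>x\<in>X. PT X f x)" using A1 A2 by blast
  have E3: "trans_points X f = F_trans_points (nabla (F_vec r a)) X f" if "Cc"
    using TP FT that by auto
  show ?thesis using E0 E1 E3 by blast
qed

end
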